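(* Consider the problem $\min f(x)$ subject to $x\in\mathcal{F}\cap\mathcal{Z}\cap X$, where $\mathcal{F}=\{x:g(x)\le0\}$, and the penalized problem $\min\{P(x;\varepsilon): x\in X\cap\mathcal{Z}\}$ with $P(x;\varepsilon)=f(x)+\frac1\varepsilon\sum_{i=1}^m\max\{0,g_i(x)\}$. Suppose EMFCQ (see context) holds. Then for any $\varepsilon>0$, every Clarke stationary point $\bar x$ of the penalized problem with $\bar x\in\mathcal{F}\cap\mathcal{Z}\cap X$ is a KKT stationary point of the constrained problem.
   Context: $\{1,\dots,n\}=I^c\cup I^z$, $I^c\cap I^z=\emptyset$; $v_c=(v_i)_{i\in I^c}$, $v_z=(v_i)_{i\in I^z}$. $l,u\in\mathbb{R}^n$ finite, $l_i<u_i$, $l_i,u_i\in\mathbb{Z}$ for $i\in I^z$; $X=\{x:l\le x\le u\}$, $\mathcal{Z}=\{x: x_i\in\mathbb{Z}\ \forall i\in I^z\}$. $f$ and $g=(g_1,\dots,g_m)$ are Lipschitz continuous w.r.t. the continuous variables: $|h(x)-h(y)|\le L\|x-y\|$ for $h\in\{f,g_1,\dots,g_m\}$ whenever $x_z=y_z$. A vector in $\mathbb{Z}^p$ is primitive if the gcd of its components is 1. For $x\in X\cap\mathcal{Z}$: $D^z(x)=\{d\in\mathbb{Z}^n: d_i=0\ (i\in I^c),\ d_z\text{ primitive},\ x+d\in X\cap\mathcal{Z}\}$, $\mathcal{B}^z(x)=\{x+d: d\in D^z(x)\}$, $D^c(x)=\{s: s_i=0\ (i\in I^z),\ s_i\ge0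 \text{ if } i\in I^c,x_i=l_i,\ s_i\le0\text{ if } i\in I^c,x_i=u_i\}$. For $h$ Lipschitz w.r.t. continuous variables and $s$ with $s_z=0$: $h^{Cl}_{x_c}(x;s)=\limsup_{y_c\to x_c,\,y_z=x_z,\,t\downarrow0}\frac{h(y+ts)-h(y)}{t}$, $\partial_c h(x)=\{v: v_z=0,\ h^{Cl}_{x_c}(x;s)\ge s^\top v\ \forall s \text{ with } s_z=0\}$. Clarke stationary point of the penalized problem: $x\in X\cap\mathcal{Z}$ with $P^{Cl}_{x_c}(x;s)\ge0$ for all $s\in D^c(x)$ and $P(x;\varepsilon)\le P(y;\varepsilon)$ for all $y\in\mathcal{B}^z(x)$. KKT stationary point of the constrained problem: $x^*\in\mathcal{F}\cap\mathcal{Z}\cap X$ for which there is $\lambda\in\mathbb{R}^m$ with $\lambda\ge0$, $\lambda^\top g(x^* )=0$, $\max\{\xi^\top s: \xi\in\partial_c f(x^* )+\sum_{i=1}^m\lambda_i\partial_c g_i(x^* )\}\ge0$ for every $s\in D^c(x^* )$ (Minkowski sum of sets), and $f(x^* )\le f(x)$ for all $x\in\mathcal{B}^z(x^* )\cap\mathcal{F}$. EMFCQ: for every $x\in(X\cap\mathcal{Z})\setminus\operatorname{int}\mathcal{F}$, either (i) there is $s\in D^c(x)$ with $\xi^\top s<0$ for all $\xi\in\partial_c g_i(x)$ and all $i$ with $g_i(x)\ge0$; or (ii) there is $\bar d\in D^z(x)$ with $\sum_{i}\max\{0,g_i(x+\bar d)\}<\sum_{i}\max\{0,g_i(x)\}$.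 *)

theory Defs
  imports "HOL-Analysis.Analysis"
begin

text \<open>Points of R^n are vectors x :: real^'n; Ic, Iz are the continuous / integer index sets.
  Constraints g are indexed by i < m.\<close>

definition boxX :: "real^'n \<Rightarrow> real^'n \<Rightarrow> (real^'n) set" where
  "boxX l u = {x. \<forall>i. l$i \<le> x$i \<and> x$i \<le> u$i}"

definition intZ :: "'n set \<Rightarrow> (real^'n) set" where
  "intZ Iz = {x. \<forall>i\<in>Iz. x$i \<in> \<int>}"

definition feasF :: "nat \<Rightarrow> (nat \<Rightarrow> real^'n \<Rightarrow> real) \<Rightarrow> (real^'n) set" where
  "feasF m g = {x. \<forall>i<m. g i x \<le> 0}"

definition primitive_on :: "'n set \<Rightarrow> real^'n \<Rightarrow> bool" where
  "primitive_on Iz d \<longleftrightarrow> Gcd ((\<lambda>i. \<lfloor>d$i\<rfloor>) ` Iz) = (1::int)"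

definition Dz :: "'n set \<Rightarrow> 'n set \<Rightarrow> real^'n \<Rightarrow> real^'n \<Rightarrow> real^'n \<Rightarrow> (real^'n) set" where
  "Dz Ic Iz l u x = {d. (\<forall>i. d$i \<in> \<int>) \<and> (\<forall>i\<in>Ic. d$i = 0) \<and> primitive_on Iz d
       \<and> x + d \<in> boxX l u \<inter> intZ Iz}"

definition Bz :: "'n set \<Rightarrow> 'n set \<Rightarrow> real^'n \<Rightarrow> real^'n \<Rightarrow> real^'n \<Rightarrow> (real^'n) set" where
  "Bz Ic Iz l u x = {x + d | d. d \<in> Dz Ic Iz l u x}"

definition Dc :: "'n set \<Rightarrow> 'n set \<Rightarrow> real^'n \<Rightarrow> real^'n \<Rightarrow> real^'n \<Rightarrow> (real^'n) set" where
  "Dc Ic Iz l u x = {s. (\<forall>i\<in>Iz. s$i = 0) \<and> (\<forall>i\<in>Ic. x$i = l$i \<longrightarrow> s$i \<ge> 0)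
       \<and> (\<forall>i\<in>Ic. x$i = u$i \<longrightarrow> s$i \<le> 0)}"

definition clarke_dd :: "'n set \<Rightarrow> (real^'n \<Rightarrow> real) \<Rightarrow> real^'n \<Rightarrow> real^'n \<Rightarrow> ereal" where
  "clarke_dd Iz h x s =
     Limsup (inf (nhds x) (principal {y. \<forall>i\<in>Iz. y$i = x$i}) \<times>\<^sub>F at_right 0)
       (\<lambda>(y, t). ereal ((h (y + t *\<^sub>R s) - h y) / t))"

definition clarke_sub :: "'n set \<Rightarrow> (real^'n \<Rightarrow> real) \<Rightarrow> real^'n \<Rightarrow> (real^'n) set" where
  "clarke_sub Iz h x = {v. (\<forall>i\<in>Iz. v$i = 0) \<and>
       (\<forall>s. (\<forall>i\<in>Iz. s$i = 0) \<longrightarrow> clarke_dd Iz h x s \<ge> ereal (s \<bullet> v))}"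

definition penalty :: "nat \<Rightarrow> (nat \<Rightarrow> real^'n \<Rightarrow> real) \<Rightarrow> real^'n \<Rightarrow> real" where
  "penalty m g x = (\<Sum>i<m. max 0 (g i x))"

definition Pen :: "(real^'n \<Rightarrow> real) \<Rightarrow> nat \<Rightarrow> (nat \<Rightarrow> real^'n \<Rightarrow> real) \<Rightarrow> real \<Rightarrow> real^'n \<Rightarrow> real" where
  "Pen f m g \<epsilon> x = f x + (1 / \<epsilon>) * penalty m g x"

definition clarke_stationary_pen ::
  "'n set \<Rightarrow> 'n set \<Rightarrow> real^'n \<Rightarrow> real^'n \<Rightarrow> (real^'n \<Rightarrow> real) \<Rightarrow> nat \<Rightarrow>
   (nat \<Rightarrow> real^'n \<Rightarrow> real) \<Rightarrow> real \<Rightarrow> real^'n \<Rightarrow> bool" where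
  "clarke_stationary_pen Ic Iz l u f m g \<epsilon> x \<longleftrightarrow>
     x \<in> boxX l u \<inter> intZ Iz \<and>
     (\<forall>s\<in>Dc Ic Iz l u x. clarke_dd Iz (Pen f m g \<epsilon>) x s \<ge> 0) \<and>
     (\<forall>y\<in>Bz Ic Iz l u x. Pen f m g \<epsilon> x \<le> Pen f m g \<epsilon> y)"

definition kkt_set ::
  "'n set \<Rightarrow> (real^'n \<Rightarrow> real) \<Rightarrow> nat \<Rightarrow> (nat \<Rightarrow> real^'n \<Rightarrow> real) \<Rightarrow> (nat \<Rightarrow> real) \<Rightarrow> real^'n \<Rightarrow> (real^'n) set" where
  "kkt_set Iz f m g lam x = {a + (\<Sum>i<m. b i) | a b. a \<in> clarke_sub Iz f x \<and>
       (\<forall>i<m. b i \<in> (\<lambda>v. lam i *\<^sub>R v) ` clarke_sub Iz (g i) x)}"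

definition kkt_stationary ::
  "'n set \<Rightarrow> 'n set \<Rightarrow> real^'n \<Rightarrow> real^'n \<Rightarrow> (real^'n \<Rightarrow> real) \<Rightarrow> nat \<Rightarrow>
   (nat \<Rightarrow> real^'n \<Rightarrow> real) \<Rightarrow> real^'n \<Rightarrow> bool" where
  "kkt_stationary Ic Iz l u f m g x \<longleftrightarrow>
     x \<in> feasF m g \<inter> intZ Iz \<inter> boxX l u \<and>
     (\<exists>lam::nat \<Rightarrow> real. (\<forall>i<m. lam i \<ge> 0) \<and> (\<Sum>i<m. lam i * g i x) = 0 \<and>
        (\<forall>s\<in>Dc Ic Iz l u x. Sup ((\<lambda>\<xi>. ereal (\<xi> \<bullet> s)) ` kkt_set Iz f m g lam x) \<ge> 0)) \<and>
     (\<forall>y\<in>Bz Ic Iz l u x \<inter> feasF m g. f x \<le> f y)"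

definition EMFCQ ::
  "'n set \<Rightarrow> 'n set \<Rightarrow> real^'n \<Rightarrow> real^'n \<Rightarrow> nat \<Rightarrow> (nat \<Rightarrow> real^'n \<Rightarrow> real) \<Rightarrow> bool" where
  "EMFCQ Ic Iz l u m g \<longleftrightarrow>
     (\<forall>x\<in>(boxX l u \<inter> intZ Iz) - interior (feasF m g).
        (\<exists>s\<in>Dc Ic Iz l u x. \<forall>i<m. g i x \<ge> 0 \<longrightarrow> (\<forall>\<xi>\<in>clarke_sub Iz (g i) x. \<xi> \<bullet> s < 0))
      \<or> (\<exists>d\<in>Dz Ic Iz l u x. penalty m g (x + d) < penalty m g x))"

definition lipschitz_cont :: "'n set \<Rightarrow> real \<Rightarrow> (real^'n \<Rightarrow> real) \<Rightarrow> bool" where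
  "lipschitz_cont Iz L h \<longleftrightarrow>
     (\<forall>x y. (\<forall>i\<in>Iz. x$i = y$i) \<longrightarrow> \<bar>h x - h y\<bar> \<le> L * norm (x - y))"

end

theory Submission
  imports Defs
begin
lemma HB_sublinear:
  fixes p :: "'a::euclidean_space \<Rightarrow> real"
  assumes sub: "\<And>x y. p (x + y) \<le> p x + p y"
    and hom: "\<And>c x. c > 0 \<Longrightarrow> p (c *\<^sub>R x) \<le> c * p x"
  shows "\<exists>v. (\<forall>t. inner v t \<le> p t) \<and> inner v s = p s"
proof -
  have p0ge: "p 0 \<ge> 0" using sub[of 0 0] by simp
  have "p 0 \<le> (1/2) * p 0" using hom[of "1/2" 0] by simp
  hence p0: "p 0 = 0" using p0ge by simp
  have homle: "p (c *\<^sub>R x) \<le> c * p x" if "c \<ge> 0" for c x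
    using that hom[of c x] p0 by (cases "c = 0") auto
  have homge: "c * p x \<le> p (c *\<^sub>R x)" if "c > 0" for c x
  proof -
    have "p x \<le> (1/c) * p (c *\<^sub>R x)" using hom[of "1/c" "c *\<^sub>R x"] that by simp
    thus ?thesis using that by (simp add: field_simps)
  qed
  have neg: "- p x \<le> p (-x)" for x using sub[of x "-x"] p0 by simp
  have line: "c * p s \<le> p (c *\<^sub>R s)" for c
  proof (cases "c > 0")
    case True thus ?thesis using homge by blast
  next
    case False
    hence "-c \<ge> 0" by simp
    have "(-c) * p (-s) \<le> p ((-c) *\<^sub>R (-s))" 
      using homge[of "-c" "-s"] False p0 by (cases "c = 0") auto
    moreover have "(-c) * (- p s) \<le> (-c) * p (-s)" using neg[of s] \<open>-c \<ge> 0\<close> by (rule mult_left_mono)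
    ultimately show ?thesis by simp
  qed
  define A where "A = {z :: 'a \<times> real. snd z > p (fst z)}"
  define B where "B = range (\<lambda>c::real. (c *\<^sub>R s, c * p s))"
  have cA: "convex A" unfolding convex_def A_def
  proof (clarsimp)
    fix a r b q and u v :: real
    assume h: "p a < r" "p b < q" "0 \<le> u" "0 \<le> v" "u + v = 1"
    have "p (u *\<^sub>R a + v *\<^sub>R b) \<le> u * p a + v * p b"
      using sub[of "u *\<^sub>R a" "v *\<^sub>R b"] homle[of u a] homle[of v b] h by linarith
    also have "\<dots> < u * r + v * q"
    proof (cases "u > 0")
      case True
      have "u * p a < u * r" using True h by simp
      moreover have "v * p b \<le> v * q" using h by (simp add: mult_left_mono)
      ultimately show ?thesis by linarith
    next
      case False
      hence "u = 0" "v = 1" using h by auto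
      thus ?thesis using h by simp
    qed
    finally show "p (u *\<^sub>R a + v *\<^sub>R b) < u * r + v * q" .
  qed
  have cB: "convex B" unfolding convex_def
  proof (intro ballI allI impI)
    fix x y and u v :: real
    assume "x \<in> B" "y \<in> B" "0 \<le> u" "0 \<le> v" "u + v = 1"
    then obtain c d where "x = (c *\<^sub>R s, c * p s)" "y = (d *\<^sub>R s, d * p s)" unfolding B_def by auto
    hence "u *\<^sub>R x + v *\<^sub>R y = ((u * c + v * d) *\<^sub>R s, (u * c + v * d) * p s)"
      by (simp add: algebra_simps)
    thus "u *\<^sub>R x + v *\<^sub>R y \<in> B" unfolding B_def by blast
  qed
  have nA: "A \<noteq> {}" using A_def p0 by (auto intro!: exI[of _ "0"] exI[of _ "1::real"])
  have nB: "B \<noteq> {}" unfolding B_def by simp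
  have dAB: "A \<inter> B = {}" unfolding A_def B_def using line by (auto simp: not_less) (meson line not_less)
  obtain a b where ab: "a \<noteq> 0" "\<forall>z\<in>A. inner a z \<le> b" "\<forall>z\<in>B. inner a z \<ge> b"
    using separating_hyperplane_sets[OF cA cB nA nB dAB] by blast
  obtain w k where a: "a = (w, k)" by (cases a)
  have ipair: "inner (w, k) (t, r) = inner w t + k * r" for t r by (simp add: inner_Pair)
  have Bline: "b \<le> c * (inner w s + k * p s)" for c
  proof -
    have "(c *\<^sub>R s, c * p s) \<in> B" unfolding B_def by (rule rangeI)
    hence "b \<le> inner (w, k) (c *\<^sub>R s, c * p s)" using ab(3) unfolding a by blast
    thus ?thesis by (simp add: ipair algebra_simps)
  qed
  have b0: "b \<le> 0" using Bline[of 0] by simp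
  have q0: "inner w s + k * p s = 0"
  proof (rule ccontr)
    assume q: "inner w s + k * p s \<noteq> 0"
    have "b \<le> ((b - 1) / (inner w s + k * p s)) * (inner w s + k * p s)" by (rule Bline)
    also have "\<dots> = b - 1" using q by simp
    finally show False by simp
  qed
  have Ain: "(t, r) \<in> A" if "r > p t" for t r using that A_def by simp
  have Aineq: "inner w t + k * r \<le> b" if "r > p t" for t r
  proof -
    have "inner (w, k) (t, r) \<le> b" using ab(2) Ain[OF that] unfolding a by blast
    thus ?thesis by (simp add: ipair)
  qed
  have k0: "k \<le> 0" using Aineq[of 0 1] p0 b0 by simp
  have kn: "k \<noteq> 0"
  proof
    assume "k = 0"
    hence "inner w w \<le> 0" using Aineq[of w "p w + 1"] b0 by simp
    hence "w = 0" by (meson inner_gt_zero_iff not_le)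
    thus False using ab(1) a \<open>k = 0\<close> by (simp add: zero_prod_def)
  qed
  have main: "inner w t + k * p t \<le> 0" for t
  proof (rule ccontr)
    assume "\<not> ?thesis"
    hence e: "inner w t + k * p t > 0" by simp
    define d where "d = (inner w t + k * p t) / (-2 * k)"
    have dpos: "d > 0" using e k0 kn unfolding d_def by (simp add: divide_pos_neg)
    have "inner w t + k * (p t + d) \<le> b" using Aineq[of t "p t + d"] dpos by simp
    moreover have "k * d = - (inner w t + k * p t) / 2" using kn unfolding d_def by (simp add: field_simps)
    ultimately show False using e b0 by (simp add: algebra_simps)
  qed
  define v where "v = (-1/k) *\<^sub>R w"
  have kneg: "-1/k > 0" using k0 kn by simp
  have "inner v t \<le> p t" for t
  proof -
    have "inner v t = (-1/k) * inner w t" by (simp add: v_def)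
    also have "\<dots> \<le> (-1/k) * (- k * p t)" using main[of t] kneg by (intro mult_left_mono) auto
    also have "\<dots> = p t" using kn by simp
    finally show ?thesis .
  qed
  moreover have "inner v s = p s" using q0 kn by (simp add: v_def field_simps)
  ultimately show ?thesis by blast
qed

definition FF :: "'n set \<Rightarrow> real^'n \<Rightarrow> ((real^'n) \<times> real) filter" where
  "FF Iz x = inf (nhds x) (principal {y. \<forall>i\<in>Iz. y$i = x$i}) \<times>\<^sub>F at_right 0"

definition DQ :: "(real^'n \<Rightarrow> real) \<Rightarrow> real^'n \<Rightarrow> (real^'n) \<times> real \<Rightarrow> real" where
  "DQ h s z = (h (fst z + snd z *\<^sub>R s) - h (fst z)) / snd z"

lemma clarke_dd_alt: "clarke_dd Iz h x s = Limsup (FF Iz x) (\<lambda>z. ereal (DQ h s z))"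
  unfolding clarke_dd_def FF_def DQ_def by (intro arg_cong[where f="Limsup _"] ext) (simp add: case_prod_beta)

lemma evFF: "eventually P (FF Iz x) \<longleftrightarrow>
  (\<exists>r>0. \<exists>\<tau>>0. \<forall>y t. (\<forall>i\<in>Iz. y$i = x$i) \<longrightarrow> dist y x < r \<longrightarrow> 0 < t \<longrightarrow> t < \<tau> \<longrightarrow> P (y, t))"
proof
  assume "eventually P (FF Iz x)"
  then obtain Pf Pg where h: "eventually Pf (inf (nhds x) (principal {y. \<forall>i\<in>Iz. y$i = x$i}))"
    "eventually Pg (at_right (0::real))" "\<forall>y t. Pf y \<longrightarrow> Pg t \<longrightarrow> P (y, t)"
    unfolding FF_def eventually_prod_filter by blast
  from h(1) obtain r where r: "r > 0" "\<forall>y. dist y x < r \<longrightarrow> (\<forall>i\<in>Iz. y$i = x$i) \<longrightarrow> Pf y"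
    unfolding eventually_inf_principal eventually_nhds_metric by auto
  from h(2) obtain b where b: "b > 0" "\<forall>t>0. t < b \<longrightarrow> Pg t"
    unfolding eventually_at_right_field by auto
  show "\<exists>r>0. \<exists>\<tau>>0. \<forall>y t. (\<forall>i\<in>Iz. y$i = x$i) \<longrightarrow> dist y x < r \<longrightarrow> 0 < t \<longrightarrow> t < \<tau> \<longrightarrow> P (y, t)"
    using r b h(3) by blast
next
  assume "\<exists>r>0. \<exists>\<tau>>0. \<forall>y t. (\<forall>i\<in>Iz. y$i = x$i) \<longrightarrow> dist y x < r \<longrightarrow> 0 < t \<longrightarrow> t < \<tau> \<longrightarrow> P (y, t)"
  then obtain r \<tau> where h: "r > 0" "\<tau> > 0"
    "\<forall>y t. (\<forall>i\<in>Iz. y$i = x$i) \<longrightarrow> dist y x < r \<longrightarrow> 0 < t \<longrightarrow> t < \<tau> \<longrightarrow> P (y, t)" by blast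
  have e1: "eventually (\<lambda>y. (\<forall>i\<in>Iz. y$i = x$i) \<and> dist y x < r) (inf (nhds x) (principal {y. \<forall>i\<in>Iz. y$i = x$i}))"
    unfolding eventually_inf_principal eventually_nhds_metric using h(1) by auto
  have e2: "eventually (\<lambda>t. 0 < t \<and> t < \<tau>) (at_right (0::real))"
    unfolding eventually_at_right_field using h(2) by auto
  show "eventually P (FF Iz x)"
    unfolding FF_def eventually_prod_filter using e1 e2 h(3) by blast
qed

lemma FF_nbot: "FF Iz x \<noteq> bot"
proof -
  have "\<not> eventually (\<lambda>_. False) (FF Iz x)"
  proof
    assume "eventually (\<lambda>_. False) (FF Iz x)"
    hence "\<exists>r>0. \<exists>\<tau>::real>0. \<forall>y t. (\<forall>i\<in>Iz. y$i = x$i) \<longrightarrow> dist y x < r \<longrightarrow> 0 < t \<longrightarrow> t < \<tau> \<longrightarrow> False"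
      by (simp only: evFF)
    thus False
    proof (elim exE conjE)
      fix r \<tau> :: real
      assume h: "r > 0" "\<tau> > 0"
        "\<forall>y t. (\<forall>i\<in>Iz. y$i = x$i) \<longrightarrow> dist y x < r \<longrightarrow> 0 < t \<longrightarrow> t < \<tau> \<longrightarrow> False"
      have "dist x x < r" "0 < \<tau>/2" "\<tau>/2 < \<tau>" using h(1,2) by auto
      thus False using h(3)[rule_format, of x "\<tau>/2"] by blast
    qed
  qed
  thus ?thesis by (metis eventually_False)
qed

lemma lip_dq:
  assumes "lipschitz_cont Iz L h" "\<forall>i\<in>Iz. s$i = 0" "\<forall>i\<in>Iz. y$i = x$i" "t > 0"
  shows "\<bar>DQ h s (y, t)\<bar> \<le> L * norm s"
proof -
  have "\<forall>i\<in>Iz. (y + t *\<^sub>R s)$i = y$i" using assms(2) by simp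
  hence "\<bar>h (y + t *\<^sub>R s) - h y\<bar> \<le> L * norm ((y + t *\<^sub>R s) - y)"
    using assms(1) unfolding lipschitz_cont_def by blast
  also have "\<dots> = t * (L * norm s)" using assms(4) by simp
  finally have *: "\<bar>h (y + t *\<^sub>R s) - h y\<bar> \<le> t * (L * norm s)" .
  have "\<bar>DQ h s (y, t)\<bar> = \<bar>h (y + t *\<^sub>R s) - h y\<bar> / t" using assms(4) by (simp add: DQ_def abs_divide)
  also have "\<dots> \<le> t * (L * norm s) / t" using * assms(4) by (intro divide_right_mono) auto
  also have "\<dots> = L * norm s" using assms(4) by simp
  finally show ?thesis .
qed

lemma cd_fin:
  assumes "lipschitz_cont Iz L h" "\<forall>i\<in>Iz. s$i = 0"
  shows "clarke_dd Iz h x s = ereal (real_of_ereal (clarke_dd Iz h x s))"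
    "\<bar>real_of_ereal (clarke_dd Iz h x s)\<bar> \<le> L * norm s"
proof -
  have ev: "eventually (\<lambda>z. \<bar>DQ h s z\<bar> \<le> L * norm s) (FF Iz x)"
    unfolding evFF
  proof (intro exI[of _ 1] conjI allI impI)
    fix y t assume "\<forall>i\<in>Iz. y$i = x$i" "0 < (t::real)"
    thus "\<bar>DQ h s (y, t)\<bar> \<le> L * norm s" using lip_dq[OF assms] by blast
  qed simp_all
  have up: "clarke_dd Iz h x s \<le> ereal (L * norm s)" unfolding clarke_dd_alt
    by (rule Limsup_bounded) (use ev in \<open>auto elim!: eventually_mono\<close>)
  have lo: "ereal (- (L * norm s)) \<le> clarke_dd Iz h x s" unfolding clarke_dd_alt
    by (rule le_Limsup[OF FF_nbot]) (use ev in \<open>auto elim!: eventually_mono\<close>)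
  from up lo show "clarke_dd Iz h x s = ereal (real_of_ereal (clarke_dd Iz h x s))"
    by (cases "clarke_dd Iz h x s") auto
  from up lo show "\<bar>real_of_ereal (clarke_dd Iz h x s)\<bar> \<le> L * norm s"
    by (cases "clarke_dd Iz h x s") auto
qed

abbreviation cdr :: "'n set \<Rightarrow> (real^'n \<Rightarrow> real) \<Rightarrow> real^'n \<Rightarrow> real^'n \<Rightarrow> real" where
  "cdr Iz h x s \<equiv> real_of_ereal (clarke_dd Iz h x s)"

lemma evFF_I:
  assumes "r > 0" "\<tau> > 0"
    "\<And>y t. \<forall>i\<in>Iz. y$i = x$i \<Longrightarrow> dist y x < r \<Longrightarrow> 0 < t \<Longrightarrow> t < \<tau> \<Longrightarrow> P (y, t)"
  shows "eventually P (FF Iz x)"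
  unfolding evFF using assms by blast

lemma evFF_E:
  assumes "eventually P (FF Iz x)"
  obtains r \<tau> where "r > 0" "\<tau> > 0"
    "\<And>y t. \<forall>i\<in>Iz. y$i = x$i \<Longrightarrow> dist y x < r \<Longrightarrow> 0 < t \<Longrightarrow> t < \<tau> \<Longrightarrow> P (y, t)"
proof -
  have "\<exists>r>0. \<exists>\<tau>::real>0. \<forall>y t. (\<forall>i\<in>Iz. y$i = x$i) \<longrightarrow> dist y x < r \<longrightarrow> 0 < t \<longrightarrow> t < \<tau> \<longrightarrow> P (y, t)"
    using assms by (simp only: evFF)
  then obtain r \<tau> :: real where A: "r > 0" "\<tau> > 0" and
    H: "\<forall>y t. (\<forall>i\<in>Iz. y$i = x$i) \<longrightarrow> dist y x < r \<longrightarrow> 0 < t \<longrightarrow> t < \<tau> \<longrightarrow> P (y, t)"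
    by (elim exE conjE)
  show ?thesis
  proof (rule that[OF A])
    fix y t assume a: "\<forall>i\<in>Iz. y$i = x$i" "dist y x < r" "0 < t" "t < \<tau>"
    show "P (y, t)" using H a(2-4) a(1)[rule_format] by (intro H[rule_format]) auto
  qed
qed

lemma ev_upper:
  assumes "lipschitz_cont Iz L h" "\<forall>i\<in>Iz. s$i = 0" "\<delta> > 0"
  shows "eventually (\<lambda>z. DQ h s z < cdr Iz h x s + \<delta>) (FF Iz x)"
proof -
  obtain c where e: "clarke_dd Iz h x s = ereal c" using cd_fin(1)[OF assms(1,2)] by blast
  have "Limsup (FF Iz x) (\<lambda>z. ereal (DQ h s z)) = ereal c" using e by (simp only: clarke_dd_alt)
  hence "Limsup (FF Iz x) (\<lambda>z. ereal (DQ h s z)) < ereal (cdr Iz h x s + \<delta>)"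
    using assms(3) e by simp
  from Limsup_lessD[OF this] show ?thesis by simp
qed

lemma le_of_ev:
  assumes "eventually (\<lambda>z. DQ h s z \<le> R) (FF Iz x)"
  shows "clarke_dd Iz h x s \<le> ereal R"
  unfolding clarke_dd_alt by (rule Limsup_bounded) (use assms in \<open>auto elim!: eventually_mono\<close>)

lemma ev_pos: "eventually (\<lambda>z. snd z > 0) (FF Iz x)"
  by (rule evFF_I[of 1 1]) auto

lemma ev_shift:
  assumes "\<forall>i\<in>Iz. s$i = 0" "eventually P (FF Iz x)"
  shows "eventually (\<lambda>z. P (fst z + snd z *\<^sub>R s, snd z)) (FF Iz x)"
proof -
  obtain r \<tau> where h: "r > 0" "\<tau> > 0"
    "\<And>y t. \<forall>i\<in>Iz. y$i = x$i \<Longrightarrow> dist y x < r \<Longrightarrow> 0 < t \<Longrightarrow> t < \<tau> \<Longrightarrow> P (y, t)"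
    using evFF_E[OF assms(2)] by blast
  define \<tau>' where "\<tau>' = min \<tau> (r / (2 * (norm s + 1)))"
  have "r / (2 * (norm s + 1)) > 0" using h(1) by (intro divide_pos_pos) (auto intro: add_nonneg_pos)
  hence t': "\<tau>' > 0" using h(2) by (simp add: \<tau>'_def)
  show ?thesis
  proof (rule evFF_I[of "r/2" \<tau>'])
    fix y and t :: real
    assume y: "\<forall>i\<in>Iz. y$i = x$i" "dist y x < r/2" "0 < t" "t < \<tau>'"
    have "\<forall>i\<in>Iz. (y + t *\<^sub>R s)$i = x$i" using y(1) assms(1) by simp
    moreover have "dist (y + t *\<^sub>R s) x < r"
    proof -
      have "t * norm s \<le> \<tau>' * norm s" using y(3,4) by (intro mult_right_mono) auto
      also have "\<dots> \<le> (r / (2 * (norm s + 1))) * norm s" unfolding \<tau>'_def by (intro mult_right_mono) auto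
      also have "\<dots> \<le> (r / (2 * (norm s + 1))) * (norm s + 1)" using h(1) by (intro mult_left_mono) auto
      also have "\<dots> = r/2"
      proof -
        have "norm s + 1 \<noteq> 0" by (metis add_nonneg_pos norm_ge_zero zero_less_one order.strict_iff_not)
        thus ?thesis by (simp add: field_simps)
      qed
      finally have "t * norm s \<le> r/2" .
      moreover have "dist (y + t *\<^sub>R s) x \<le> dist y x + t * norm s"
      proof -
        have "y + t *\<^sub>R s - x = (y - x) + t *\<^sub>R s" by simp
        hence "norm (y + t *\<^sub>R s - x) \<le> norm (y - x) + norm (t *\<^sub>R s)" by (metis norm_triangle_ineq)
        thus ?thesis using y(3) by (simp add: dist_norm)
      qed
      ultimately show ?thesis using y(2) by linarith
    qed
    moreover have "t < \<tau>" using y(4) unfolding \<tau>'_def by simp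
    ultimately have "P (y + t *\<^sub>R s, t)" using y(3) by (intro h(3))
    thus "P (fst (y, t) + snd (y, t) *\<^sub>R s, snd (y, t))" by simp
  qed (use h(1) t' in auto)
qed

lemma ev_scale:
  assumes "c > 0" "eventually P (FF Iz x)"
  shows "eventually (\<lambda>z. P (fst z, c * snd z)) (FF Iz x)"
proof -
  obtain r \<tau> where h: "r > 0" "\<tau> > 0"
    "\<And>y t. \<forall>i\<in>Iz. y$i = x$i \<Longrightarrow> dist y x < r \<Longrightarrow> 0 < t \<Longrightarrow> t < \<tau> \<Longrightarrow> P (y, t)"
    using evFF_E[OF assms(2)] by blast
  show ?thesis
  proof (rule evFF_I[of r "\<tau> / c"])
    fix y and t :: real
    assume y: "\<forall>i\<in>Iz. y$i = x$i" "dist y x < r" "0 < t" "t < \<tau> / c"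
    have "0 < c * t" using y(3) assms(1) by simp
    moreover have "c * t < \<tau>" using y(4) assms(1) by (simp add: field_simps)
    ultimately have "P (y, c * t)" using y(1,2) by (intro h(3))
    thus "P (fst (y, t), c * snd (y, t))" by simp
  qed (use h(1,2) assms(1) in auto)
qed

lemma cd0: "clarke_dd Iz h x 0 = 0"
proof -
  have "(\<lambda>z. ereal (DQ h 0 z)) = (\<lambda>z. 0)" by (simp add: DQ_def fun_eq_iff zero_ereal_def)
  moreover have "\<not> trivial_limit (FF Iz x)" using FF_nbot by (simp add: trivial_limit_def)
  ultimately show ?thesis unfolding clarke_dd_alt by (simp add: Limsup_const)
qed

lemma DQ_decomp:
  assumes "snd z \<noteq> 0"
  shows "DQ h (s1 + s2) z = DQ h s2 (fst z + snd z *\<^sub>R s1, snd z) + DQ h s1 z"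
proof -
  have e: "fst z + snd z *\<^sub>R (s1 + s2) = (fst z + snd z *\<^sub>R s1) + snd z *\<^sub>R s2"
    by (simp add: scaleR_add_right add.assoc)
  show ?thesis unfolding DQ_def using assms e by (simp add: diff_divide_distrib add_divide_distrib add.assoc)
qed

lemma DQ_scale:
  assumes "snd z \<noteq> 0" "c > 0"
  shows "DQ h (c *\<^sub>R s) z = c * DQ h s (fst z, c * snd z)"
  unfolding DQ_def using assms by (simp add: field_simps)

lemma cd_subadd:
  assumes "lipschitz_cont Iz L h" "\<forall>i\<in>Iz. s1$i = 0" "\<forall>i\<in>Iz. s2$i = 0"
  shows "cdr Iz h x (s1 + s2) \<le> cdr Iz h x s1 + cdr Iz h x s2"
proof (rule field_le_epsilon)
  fix e :: real assume e: "e > 0"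
  have E1: "eventually (\<lambda>z. DQ h s1 z < cdr Iz h x s1 + e/2) (FF Iz x)"
    using ev_upper[OF assms(1,2)] e by simp
  have E2: "eventually (\<lambda>z. DQ h s2 (fst z + snd z *\<^sub>R s1, snd z) < cdr Iz h x s2 + e/2) (FF Iz x)"
    using ev_shift[OF assms(2) ev_upper[OF assms(1,3), of "e/2" x]] e by simp
  have "eventually (\<lambda>z. DQ h (s1 + s2) z \<le> cdr Iz h x s1 + cdr Iz h x s2 + e) (FF Iz x)"
    using E1 E2 ev_pos
  proof eventually_elim
    case (elim z)
    thus ?case using DQ_decomp[of z h s1 s2] by simp
  qed
  hence "clarke_dd Iz h x (s1 + s2) \<le> ereal (cdr Iz h x s1 + cdr Iz h x s2 + e)" by (rule le_of_ev)
  moreover have "clarke_dd Iz h x (s1 + s2) = ereal (cdr Iz h x (s1 + s2))"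
    using cd_fin(1)[OF assms(1)] assms(2,3) by simp
  ultimately show "cdr Iz h x (s1 + s2) \<le> cdr Iz h x s1 + cdr Iz h x s2 + e" by (metis ereal_less_eq(3))
qed

lemma cd_hom:
  assumes "lipschitz_cont Iz L h" "\<forall>i\<in>Iz. s$i = 0" "c > 0"
  shows "cdr Iz h x (c *\<^sub>R s) \<le> c * cdr Iz h x s"
proof (rule field_le_epsilon)
  fix e :: real assume e: "e > 0"
  have E: "eventually (\<lambda>z. DQ h s (fst z, c * snd z) < cdr Iz h x s + e / c) (FF Iz x)"
    using ev_scale[OF assms(3) ev_upper[OF assms(1,2), of "e/c" x]] e assms(3) by simp
  have "eventually (\<lambda>z. DQ h (c *\<^sub>R s) z \<le> c * cdr Iz h x s + e) (FF Iz x)"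
    using E ev_pos
  proof eventually_elim
    case (elim z)
    have "DQ h (c *\<^sub>R s) z = c * DQ h s (fst z, c * snd z)" using elim assms(3) by (intro DQ_scale) auto
    also have "\<dots> \<le> c * (cdr Iz h x s + e / c)" using elim assms(3) by (intro mult_left_mono) auto
    also have "\<dots> = c * cdr Iz h x s + e" using assms(3) by (simp add: field_simps)
    finally show ?case .
  qed
  hence "clarke_dd Iz h x (c *\<^sub>R s) \<le> ereal (c * cdr Iz h x s + e)" by (rule le_of_ev)
  moreover have "clarke_dd Iz h x (c *\<^sub>R s) = ereal (cdr Iz h x (c *\<^sub>R s))"
    using cd_fin(1)[OF assms(1)] assms(2) by simp
  ultimately show "cdr Iz h x (c *\<^sub>R s) \<le> c * cdr Iz h x s + e" by (metis ereal_less_eq(3))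
qed

definition projz :: "'n set \<Rightarrow> real^'n \<Rightarrow> real^'n" where
  "projz Iz t = (\<chi> i. if i \<in> Iz then 0 else t$i)"

lemma projz_SZ: "\<forall>i\<in>Iz. projz Iz t $ i = 0" by (simp add: projz_def)
lemma projz_add: "projz Iz (a + b) = projz Iz a + projz Iz b" by (simp add: projz_def vec_eq_iff)
lemma projz_scale: "projz Iz (c *\<^sub>R a) = c *\<^sub>R projz Iz a" by (simp add: projz_def vec_eq_iff)
lemma projz_id: "\<forall>i\<in>Iz. s$i = 0 \<Longrightarrow> projz Iz s = s" by (simp add: projz_def vec_eq_iff)
lemma projz_axis: "j \<in> Iz \<Longrightarrow> projz Iz (axis j c) = 0" by (simp add: projz_def vec_eq_iff axis_def)

lemma sub_exists:
  assumes "lipschitz_cont Iz L h" "\<forall>i\<in>Iz. s$i = 0"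
  shows "\<exists>v\<in>clarke_sub Iz h x. inner s v = cdr Iz h x s"
proof -
  define p where "p t = cdr Iz h x (projz Iz t)" for t
  have "\<exists>v. (\<forall>t. inner v t \<le> p t) \<and> inner v s = p s"
  proof (rule HB_sublinear)
    fix a b show "p (a + b) \<le> p a + p b"
      unfolding p_def projz_add by (rule cd_subadd[OF assms(1) projz_SZ projz_SZ])
  next
    fix c :: real and a assume "c > 0"
    thus "p (c *\<^sub>R a) \<le> c * p a"
      unfolding p_def projz_scale by (rule cd_hom[OF assms(1) projz_SZ])
  qed
  then obtain v where v: "\<And>t. inner v t \<le> p t" "inner v s = p s" by blast
  have p0: "p (axis j c) = 0" if "j \<in> Iz" for j c
    unfolding p_def projz_axis[OF that] cd0 by simp
  have vz: "\<forall>i\<in>Iz. v$i = 0"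
  proof
    fix j assume j: "j \<in> Iz"
    have "v$j \<le> 0" using v(1)[of "axis j 1"] p0[OF j] by (simp add: inner_axis)
    moreover have "- v$j \<le> 0" using v(1)[of "axis j (-1)"] p0[OF j] by (simp add: inner_axis)
    ultimately show "v$j = 0" by simp
  qed
  have "v \<in> clarke_sub Iz h x" unfolding clarke_sub_def
  proof (intro CollectI conjI allI impI vz)
    fix s' :: "real^'a" assume s': "\<forall>i\<in>Iz. s'$i = 0"
    have "inner s' v \<le> cdr Iz h x s'" using v(1)[of s'] unfolding p_def projz_id[OF s'] by (simp add: inner_commute)
    moreover have "clarke_dd Iz h x s' = ereal (cdr Iz h x s')" by (rule cd_fin(1)[OF assms(1) s'])
    ultimately show "ereal (s' \<bullet> v) \<le> clarke_dd Iz h x s'" by (metis ereal_less_eq(3))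
  qed
  moreover have "inner s v = cdr Iz h x s" using v(2) unfolding p_def projz_id[OF assms(2)] by (simp add: inner_commute)
  ultimately show ?thesis by blast
qed

lemma clarke_sub_eq:
  assumes "lipschitz_cont Iz L h"
  shows "clarke_sub Iz h x = {v. (\<forall>i\<in>Iz. v$i = 0) \<and> (\<forall>s. (\<forall>i\<in>Iz. s$i = 0) \<longrightarrow> inner s v \<le> cdr Iz h x s)}"
proof -
  have "ereal (inner s v) \<le> clarke_dd Iz h x s \<longleftrightarrow> inner s v \<le> cdr Iz h x s" if "\<forall>i\<in>Iz. s$i = 0" for s v
    using cd_fin(1)[OF assms that, of x] by (metis ereal_less_eq(3))
  thus ?thesis unfolding clarke_sub_def by blast
qed

lemma clarke_sub_props:
  assumes "lipschitz_cont Iz L h"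
  shows "convex (clarke_sub Iz h x)" "compact (clarke_sub Iz h x)" "clarke_sub Iz h x \<noteq> {}"
proof -
  let ?S = "clarke_sub Iz h x"
  have eq: "?S = (\<Inter>i\<in>Iz. {v. inner (axis i 1) v = 0}) \<inter> (\<Inter>s\<in>{s. \<forall>i\<in>Iz. s$i = 0}. {v. inner s v \<le> cdr Iz h x s})"
    unfolding clarke_sub_eq[OF assms] by (auto simp: inner_axis')
  show "convex ?S" unfolding eq
    by (intro convex_Int convex_INT convex_hyperplane convex_halfspace_le)
  have cl: "closed ?S" unfolding eq
    by (intro closed_Int closed_INT ballI closed_hyperplane closed_halfspace_le)
  have bd: "bounded ?S" unfolding bounded_iff
  proof (intro exI[of _ "\<bar>L\<bar>"] ballI)
    fix v assume v: "v \<in> ?S"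
    hence vz: "\<forall>i\<in>Iz. v$i = 0" and le: "inner v v \<le> cdr Iz h x v"
      unfolding clarke_sub_eq[OF assms] by auto
    have "cdr Iz h x v \<le> L * norm v" using cd_fin(2)[OF assms vz, of x] by linarith
    hence "norm v * norm v \<le> L * norm v" using le by (simp add: power2_norm_eq_inner[symmetric] power2_eq_square)
    thus "norm v \<le> \<bar>L\<bar>"
      by (cases "norm v = 0") (auto simp: mult_le_cancel_right)
  qed
  show "compact ?S" using cl bd by (simp add: compact_eq_bounded_closed)
  show "?S \<noteq> {}" using sub_exists[OF assms, of 0 x] by auto
qed

primrec Ksum :: "('a::real_normed_vector) set \<Rightarrow> (nat \<Rightarrow> 'a set) \<Rightarrow> nat \<Rightarrow> 'a set" where
  "Ksum S W 0 = S"
| "Ksum S W (Suc k) = (\<Union>a\<in>Ksum S W k. \<Union>b\<in>W k. {a + b})"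

lemma Ksum_convex: "convex S \<Longrightarrow> (\<And>i. convex (W i)) \<Longrightarrow> convex (Ksum S W k)"
  by (induction k) (auto intro: convex_sums)

lemma Ksum_compact: "compact S \<Longrightarrow> (\<And>i. compact (W i)) \<Longrightarrow> compact (Ksum S W k)"
  by (induction k) (auto intro: compact_sums')

lemma Ksum_intro: "a \<in> S \<Longrightarrow> (\<And>i. i < k \<Longrightarrow> b i \<in> W i) \<Longrightarrow> a + (\<Sum>i<k. b i) \<in> Ksum S W k"
proof (induction k)
  case 0 thus ?case by simp
next
  case (Suc k)
  hence "a + (\<Sum>i<k. b i) \<in> Ksum S W k" by simp
  moreover have "b k \<in> W k" using Suc.prems by simp
  moreover have eq: "a + (\<Sum>i<Suc k. b i) = (a + (\<Sum>i<k. b i)) + b k" by (simp add: add.assoc)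
  ultimately show ?case unfolding Ksum.simps eq by blast
qed

lemma Ksum_elim: "\<xi> \<in> Ksum S W k \<Longrightarrow> \<exists>a b. a \<in> S \<and> (\<forall>i<k. b i \<in> W i) \<and> \<xi> = a + (\<Sum>i<k. b i)"
proof (induction k arbitrary: \<xi>)
  case 0 thus ?case by (intro exI[of _ \<xi>] exI[of _ "\<lambda>_. 0"]) simp
next
  case (Suc k)
  then obtain \<xi>' c where c: "\<xi>' \<in> Ksum S W k" "c \<in> W k" "\<xi> = \<xi>' + c" by auto
  then obtain a b where ab: "a \<in> S" "\<forall>i<k. b i \<in> W i" "\<xi>' = a + (\<Sum>i<k. b i)" using Suc.IH by blast
  show ?case
  proof (intro exI[of _ a] exI[of _ "b(k := c)"] conjI)
    show "a \<in> S" by fact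
    show "\<forall>i<Suc k. (b(k := c)) i \<in> W i" using ab(2) c(2) by (auto simp: less_Suc_eq)
    have "(\<Sum>i<k. (b(k := c)) i) = (\<Sum>i<k. b i)" by (intro sum.cong) auto
    thus "\<xi> = a + (\<Sum>i<Suc k. (b(k := c)) i)" using c(3) ab(3) by (simp add: add.assoc)
  qed
qed

lemma DQ_max0:
  assumes "snd z > 0"
  shows "DQ (\<lambda>y. max 0 (h y)) s z \<le> max 0 (DQ h s z)"
proof -
  have "max 0 (h (fst z + snd z *\<^sub>R s)) - max 0 (h (fst z)) \<le> max 0 (h (fst z + snd z *\<^sub>R s) - h (fst z))"
    by simp
  hence "(max 0 (h (fst z + snd z *\<^sub>R s)) - max 0 (h (fst z))) / snd z \<le> max 0 (h (fst z + snd z *\<^sub>R s) - h (fst z)) / snd z"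
    using assms by (intro divide_right_mono) auto
  also have "\<dots> = max 0 ((h (fst z + snd z *\<^sub>R s) - h (fst z)) / snd z)"
    using assms by (simp add: max_divide_distrib_right)
  finally show ?thesis unfolding DQ_def .
qed

lemma DQ_Pen:
  assumes "snd z \<noteq> 0"
  shows "DQ (Pen f m g \<epsilon>) s z = DQ f s z + (1/\<epsilon>) * (\<Sum>i<m. DQ (\<lambda>y. max 0 (g i y)) s z)"
proof -
  let ?y = "fst z" and ?y' = "fst z + snd z *\<^sub>R s" and ?t = "snd z"
  have "(\<Sum>i<m. DQ (\<lambda>y. max 0 (g i y)) s z) = (\<Sum>i<m. max 0 (g i ?y') - max 0 (g i ?y)) / ?t"
    unfolding DQ_def by (simp add: sum_divide_distrib)
  also have "\<dots> = ((\<Sum>i<m. max 0 (g i ?y')) - (\<Sum>i<m. max 0 (g i ?y))) / ?t"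
    by (simp add: sum_subtractf)
  finally have e: "(\<Sum>i<m. DQ (\<lambda>y. max 0 (g i y)) s z) = ((\<Sum>i<m. max 0 (g i ?y')) - (\<Sum>i<m. max 0 (g i ?y))) / ?t" .
  show ?thesis unfolding e unfolding DQ_def Pen_def penalty_def using assms
    by (cases "\<epsilon> = 0") (simp_all add: field_simps)
qed

lemma ev_neg:
  assumes "lipschitz_cont Iz L h" "\<forall>i\<in>Iz. s$i = 0" "h x < 0"
  shows "eventually (\<lambda>z. h (fst z) < 0 \<and> h (fst z + snd z *\<^sub>R s) < 0) (FF Iz x)"
proof -
  define a where "a = - h x"
  have a: "a > 0" using assms(3) a_def by simp
  define r where "r = a / (2 * (\<bar>L\<bar> + 1))"
  have r: "r > 0" using a by (simp add: r_def add_pos_nonneg)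
  define \<tau> where "\<tau> = r / (norm s + 1)"
  have ns: "norm s + 1 > 0" using norm_ge_zero[of s] by linarith
  have \<tau>: "\<tau> > 0" using r ns by (simp add: \<tau>_def)
  have key: "h w < 0" if w: "\<forall>i\<in>Iz. w$i = x$i" "norm (w - x) < 2 * r" for w
  proof -
    have "\<bar>h w - h x\<bar> \<le> L * norm (w - x)" using assms(1) w(1) unfolding lipschitz_cont_def by blast
    also have "\<dots> \<le> \<bar>L\<bar> * norm (w - x)" by (intro mult_right_mono) auto
    also have "\<dots> \<le> \<bar>L\<bar> * (2 * r)" using w(2) by (intro mult_left_mono) auto
    also have "\<dots> < a"
    proof -
      have "\<bar>L\<bar> * (2 * r) = a * (\<bar>L\<bar> / (\<bar>L\<bar> + 1))" by (simp add: r_def field_simps add_pos_nonneg)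
      also have "\<dots> < a * 1" using a by (intro mult_strict_left_mono) (auto simp: field_simps)
      finally show ?thesis by simp
    qed
    finally show ?thesis unfolding a_def by linarith
  qed
  show ?thesis
  proof (rule evFF_I[OF r \<tau>])
    fix y and t :: real
    assume y: "\<forall>i\<in>Iz. y$i = x$i" "dist y x < r" "0 < t" "t < \<tau>"
    have n1: "norm (y - x) < r" using y(2) by (simp add: dist_norm)
    have "t * norm s \<le> \<tau> * norm s" using y(3,4) by (intro mult_right_mono) auto
    also have "\<dots> \<le> \<tau> * (norm s + 1)" using \<tau> by (intro mult_left_mono) auto
    also have "\<dots> = r" unfolding \<tau>_def using ns by simp
    finally have ts: "t * norm s \<le> r" .
    have "norm (y + t *\<^sub>R s - x) \<le> norm (y - x) + norm (t *\<^sub>R s)"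
      by (metis add.commute add_diff_eq norm_triangle_ineq)
    hence n2: "norm (y + t *\<^sub>R s - x) < 2 * r" using n1 ts y(3) by simp
    have z2: "\<forall>i\<in>Iz. (y + t *\<^sub>R s)$i = x$i" using y(1) assms(2) by simp
    show "h (fst (y, t)) < 0 \<and> h (fst (y, t) + snd (y, t) *\<^sub>R s) < 0"
      using key[OF y(1)] n1 r key[OF z2 n2] by simp
  qed
qed

lemma key_ineq:
  fixes x s :: "real^'n::finite"
  assumes lipf: "lipschitz_cont Iz L f" and lipg: "\<forall>i<m. lipschitz_cont Iz L (g i)"
    and feas: "\<forall>i<m. g i x \<le> 0" and eps: "\<epsilon> > 0"
    and sz: "\<forall>i\<in>Iz. s$i = 0" and stat: "clarke_dd Iz (Pen f m g \<epsilon>) x s \<ge> 0"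
  shows "0 \<le> cdr Iz f x s + (1/\<epsilon>) * (\<Sum>i<m. if g i x = 0 then max 0 (cdr Iz (g i) x s) else 0)"
proof -
  define \<psi> where "\<psi> i = (if g i x = 0 then max 0 (cdr Iz (g i) x s) else 0)" for i
  define Q where "Q = cdr Iz f x s + (1/\<epsilon>) * (\<Sum>i<m. \<psi> i)"
  define K where "K = 1 + real m / \<epsilon>"
  have K: "K > 0" using eps by (simp add: K_def add_pos_nonneg)
  have main: "0 \<le> Q + \<delta> * K" if d: "\<delta> > 0" for \<delta>
  proof -
    have Ef: "eventually (\<lambda>z. DQ f s z < cdr Iz f x s + \<delta>) (FF Iz x)"
      by (rule ev_upper[OF lipf sz d])
    have Ei: "\<forall>i\<in>{..<m}. eventually (\<lambda>z. DQ (\<lambda>y. max 0 (g i y)) s z \<le> \<psi> i + \<delta>) (FF Iz x)"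
    proof
      fix i assume "i \<in> {..<m}"
      hence i: "i < m" by simp
      show "eventually (\<lambda>z. DQ (\<lambda>y. max 0 (g i y)) s z \<le> \<psi> i + \<delta>) (FF Iz x)"
      proof (cases "g i x = 0")
        case True
        have E: "eventually (\<lambda>z. DQ (g i) s z < cdr Iz (g i) x s + \<delta>) (FF Iz x)"
          using ev_upper[OF lipg[rule_format, OF i] sz d] by blast
        show ?thesis using E ev_pos
        proof eventually_elim
          case (elim z)
          have "DQ (\<lambda>y. max 0 (g i y)) s z \<le> max 0 (DQ (g i) s z)" using DQ_max0 elim(2) by blast
          also have "\<dots> \<le> max 0 (cdr Iz (g i) x s) + \<delta>" using elim(1) d by simp
          finally show ?case using True by (simp add: \<psi>_def)
        qed
      next
        case False
        hence neg: "g i x < 0" using feas i by force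
        show ?thesis using ev_neg[OF lipg[rule_format, OF i] sz neg]
        proof eventually_elim
          case (elim z)
          hence "DQ (\<lambda>y. max 0 (g i y)) s z = 0" by (simp add: DQ_def)
          thus ?case using False d by (simp add: \<psi>_def)
        qed
      qed
    qed
    have Eall: "eventually (\<lambda>z. \<forall>i\<in>{..<m}. DQ (\<lambda>y. max 0 (g i y)) s z \<le> \<psi> i + \<delta>) (FF Iz x)"
      by (rule eventually_ball_finite[OF _ Ei]) simp
    have "eventually (\<lambda>z. DQ (Pen f m g \<epsilon>) s z \<le> Q + \<delta> * K) (FF Iz x)"
      using Ef Eall ev_pos
    proof eventually_elim
      case (elim z)
      have "(\<Sum>i<m. DQ (\<lambda>y. max 0 (g i y)) s z) \<le> (\<Sum>i<m. \<psi> i + \<delta>)"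
        using elim(2) by (intro sum_mono) auto
      also have "\<dots> = (\<Sum>i<m. \<psi> i) + real m * \<delta>" by (simp add: sum.distrib)
      finally have S: "(\<Sum>i<m. DQ (\<lambda>y. max 0 (g i y)) s z) \<le> (\<Sum>i<m. \<psi> i) + real m * \<delta>" .
      have "DQ (Pen f m g \<epsilon>) s z = DQ f s z + (1/\<epsilon>) * (\<Sum>i<m. DQ (\<lambda>y. max 0 (g i y)) s z)"
        using elim(3) by (intro DQ_Pen) simp
      also have "\<dots> \<le> (cdr Iz f x s + \<delta>) + (1/\<epsilon>) * ((\<Sum>i<m. \<psi> i) + real m * \<delta>)"
        using elim(1) S eps by (intro add_mono mult_left_mono) auto
      also have "\<dots> = Q + \<delta> * K" unfolding Q_def K_def using eps by (simp add: field_simps)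
      finally show ?case .
    qed
    hence "clarke_dd Iz (Pen f m g \<epsilon>) x s \<le> ereal (Q + \<delta> * K)" by (rule le_of_ev)
    with stat have "ereal 0 \<le> ereal (Q + \<delta> * K)" unfolding zero_ereal_def by (rule order.trans)
    thus ?thesis by simp
  qed
  have "0 \<le> Q"
  proof (rule field_le_epsilon)
    fix e :: real assume e: "e > 0"
    have "0 \<le> Q + (e / K) * K" using main[of "e / K"] e K by simp
    thus "0 \<le> Q + e" using K by simp
  qed
  thus ?thesis unfolding Q_def \<psi>_def .
qed

definition dualc :: "'n set \<Rightarrow> real^'n \<Rightarrow> real^'n \<Rightarrow> real^'n \<Rightarrow> (real^'n) set" where
  "dualc Ic l u x = {\<eta>. \<forall>i\<in>Ic. (x$i = l$i \<longrightarrow> \<eta>$i \<ge> 0) \<and> (x$i = u$i \<longrightarrow> \<eta>$i \<le> 0)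
      \<and> (x$i \<noteq> l$i \<and> x$i \<noteq> u$i \<longrightarrow> \<eta>$i = 0)}"

definition okc :: "real \<Rightarrow> real \<Rightarrow> real \<Rightarrow> real \<Rightarrow> bool" where
  "okc xi li ui y \<longleftrightarrow> (xi = li \<longrightarrow> y \<ge> 0) \<and> (xi = ui \<longrightarrow> y \<le> 0) \<and> (xi \<noteq> li \<and> xi \<noteq> ui \<longrightarrow> y = 0)"

lemma dualc_okc: "dualc Ic l u x = {\<eta>. \<forall>i\<in>Ic. okc (x$i) (l$i) (u$i) (\<eta>$i)}"
  unfolding dualc_def okc_def by blast

lemma okc_comb:
  assumes "okc xi li ui a" "okc xi li ui b" "p \<ge> 0" "q \<ge> 0"
  shows "okc xi li ui (p * a + q * b)"
proof -
  have "(xi = li \<longrightarrow> a \<ge> 0 \<and> b \<ge> 0)" "(xi = ui \<longrightarrow> a \<le> 0 \<and> b \<le> 0)" "(xi \<noteq> li \<and> xi \<noteq> ui \<longrightarrow> a = 0 \<and> b = 0)"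
    using assms(1,2) unfolding okc_def by blast+
  thus ?thesis unfolding okc_def using assms(3,4)
    by (intro conjI impI; simp only: ; (intro add_nonneg_nonneg mult_nonneg_nonneg add_nonpos_nonpos mult_nonneg_nonpos)?; simp)
qed

lemma dualc_convex: "convex (dualc Ic l u x)"
  unfolding convex_def dualc_okc
proof (intro ballI allI impI, unfold mem_Collect_eq, intro ballI)
  fix a b :: "real^'a" and p q :: real and i
  assume "\<forall>i\<in>Ic. okc (x$i) (l$i) (u$i) (a$i)" "\<forall>i\<in>Ic. okc (x$i) (l$i) (u$i) (b$i)" "0 \<le> p" "0 \<le> q" "p + q = 1" "i \<in> Ic"
  thus "okc (x$i) (l$i) (u$i) ((p *\<^sub>R a + q *\<^sub>R b)$i)" using okc_comb by simp
qed

lemma okc_cases: "li < ui \<Longrightarrow> okc xi li ui y \<longleftrightarrow> (if xi = li then 0 \<le> y else if xi = ui then y \<le> 0 else y = 0)"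
  unfolding okc_def by auto

lemma okc_0: "okc xi li ui 0" unfolding okc_def by simp

lemma dualc_closed:
  fixes x :: "real^'n"
  assumes "\<forall>i. l$i < u$i"
  shows "closed (dualc Ic l u x)"
proof -
  have eq: "dualc Ic l u x = (\<Inter>i\<in>Ic. {\<eta>. okc (x$i) (l$i) (u$i) (\<eta>$i)})"
    unfolding dualc_okc by blast
  have "closed {\<eta>::real^'n. okc (x$i) (l$i) (u$i) (\<eta>$i)}" for i
  proof -
    have lu: "l$i < u$i" using assms by blast
    show ?thesis
    proof (cases "x$i = l$i")
      case True
      hence "{\<eta>::real^'n. okc (x$i) (l$i) (u$i) (\<eta>$i)} = {\<eta>. inner (axis i (-1)) \<eta> \<le> 0}"
        using okc_cases[OF lu] by (simp add: inner_axis')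
      thus ?thesis by (simp add: closed_halfspace_le)
    next
      case F1: False
      show ?thesis
      proof (cases "x$i = u$i")
        case True
        hence "{\<eta>::real^'n. okc (x$i) (l$i) (u$i) (\<eta>$i)} = {\<eta>. inner (axis i 1) \<eta> \<le> 0}"
          using okc_cases[OF lu] F1 by (simp add: inner_axis')
        thus ?thesis by (simp add: closed_halfspace_le)
      next
        case False
        hence "{\<eta>::real^'n. okc (x$i) (l$i) (u$i) (\<eta>$i)} = {\<eta>. inner (axis i 1) \<eta> = 0}"
          using okc_cases[OF lu] F1 by (simp add: inner_axis')
        thus ?thesis by (simp add: closed_hyperplane)
      qed
    qed
  qed
  thus ?thesis unfolding eq by (intro closed_INT) blast
qed

lemma dualc_0: "0 \<in> dualc Ic l u x" by (simp add: dualc_okc okc_def)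

lemma dualc_scale: "\<eta> \<in> dualc Ic l u x \<Longrightarrow> c \<ge> 0 \<Longrightarrow> c *\<^sub>R \<eta> \<in> dualc Ic l u x"
  unfolding dualc_okc using okc_comb[OF _ okc_0 _ order_refl, where p=c] by simp

lemma dualc_nonneg:
  assumes "\<eta> \<in> dualc Ic l u x" "s \<in> Dc Ic Iz l u x" "Ic \<union> Iz = UNIV" "\<forall>i. l$i < u$i"
  shows "inner \<eta> s \<ge> 0"
proof -
  have "0 \<le> \<eta>$i * s$i" for i
  proof (cases "i \<in> Iz")
    case True thus ?thesis using assms(2) by (simp add: Dc_def)
  next
    case False
    hence i: "i \<in> Ic" using assms(3) by auto
    have ok: "okc (x$i) (l$i) (u$i) (\<eta>$i)" using assms(1) i unfolding dualc_okc by blast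
    have sl: "x$i = l$i \<Longrightarrow> s$i \<ge> 0" and su: "x$i = u$i \<Longrightarrow> s$i \<le> 0"
      using assms(2) i unfolding Dc_def by blast+
    have lu: "l$i < u$i" using assms(4) by blast
    show ?thesis
    proof (cases "x$i = l$i")
      case True
      hence "\<eta>$i \<ge> 0" using ok okc_cases[OF lu] by simp
      thus ?thesis using sl[OF True] by simp
    next
      case F1: False
      show ?thesis
      proof (cases "x$i = u$i")
        case True
        hence "\<eta>$i \<le> 0" using ok okc_cases[OF lu] F1 by simp
        thus ?thesis using su[OF True] by (simp add: mult_nonpos_nonpos)
      next
        case False
        hence "\<eta>$i = 0" using ok okc_cases[OF lu] F1 by simp
        thus ?thesis by simp
      qed
    qed
  qed
  thus ?thesis by (simp add: inner_vec_def sum_nonneg)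
qed

lemma axis_dualc:
  assumes "\<forall>i. l$i < u$i" "j \<notin> Ic \<or> (x$j = l$j \<and> c \<ge> 0) \<or> (x$j = u$j \<and> c \<le> 0)"
  shows "axis j c \<in> dualc Ic l u x"
  unfolding dualc_okc
proof (intro CollectI ballI)
  fix i assume i: "i \<in> Ic"
  show "okc (x$i) (l$i) (u$i) (axis j c $ i)"
  proof (cases "i = j")
    case False thus ?thesis by (simp add: axis_def okc_0)
  next
    case True
    have lu: "l$j < u$j" using assms(1) by blast
    show ?thesis using assms(2) i True okc_cases[OF lu] lu by (auto simp: axis_def)
  qed
qed

lemma in_Dc:
  assumes "\<forall>\<eta>\<in>dualc Ic l u x. inner a \<eta> \<ge> 0" "Ic \<union> Iz = UNIV" "Ic \<inter> Iz = {}" "\<forall>i. l$i < u$i"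
  shows "a \<in> Dc Ic Iz l u x"
proof -
  have val: "inner a (axis j c) = a$j * c" for j c by (simp add: inner_axis)
  have "\<forall>i\<in>Iz. a$i = 0"
  proof
    fix j assume j: "j \<in> Iz"
    hence "j \<notin> Ic" using assms(3) by auto
    hence "axis j 1 \<in> dualc Ic l u x" "axis j (-1) \<in> dualc Ic l u x" using axis_dualc[OF assms(4)] by blast+
    hence "0 \<le> inner a (axis j 1)" "0 \<le> inner a (axis j (-1))" using assms(1) by blast+
    thus "a$j = 0" by (simp add: val)
  qed
  moreover have "\<forall>i\<in>Ic. x$i = l$i \<longrightarrow> a$i \<ge> 0"
  proof (intro ballI impI)
    fix j assume "j \<in> Ic" "x$j = l$j"
    hence "axis j 1 \<in> dualc Ic l u x" using axis_dualc[OF assms(4), where j=j and c=1] by simp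
    hence "0 \<le> inner a (axis j 1)" using assms(1) by blast
    thus "a$j \<ge> 0" by (simp add: val)
  qed
  moreover have "\<forall>i\<in>Ic. x$i = u$i \<longrightarrow> a$i \<le> 0"
  proof (intro ballI impI)
    fix j assume "j \<in> Ic" "x$j = u$j"
    hence "axis j (-1) \<in> dualc Ic l u x" using axis_dualc[OF assms(4), where j=j and c="-1"] by simp
    hence "0 \<le> inner a (axis j (-1))" using assms(1) by blast
    thus "a$j \<le> 0" by (simp add: val)
  qed
  ultimately show ?thesis unfolding Dc_def by blast
qed

theorem mainTheorem9:
  fixes Ic Iz :: "'n::finite set" and l u :: "real^'n" and f :: "real^'n \<Rightarrow> real"
    and m :: nat and g :: "nat \<Rightarrow> real^'n \<Rightarrow> real" and L \<epsilon> :: real and xbar :: "real^'n"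
  assumes "Ic \<union> Iz = UNIV" and "Ic \<inter> Iz = {}"
    and "\<forall>i. l$i < u$i"
    and "\<forall>i\<in>Iz. l$i \<in> \<int> \<and> u$i \<in> \<int>"
    and "lipschitz_cont Iz L f" and "\<forall>i<m. lipschitz_cont Iz L (g i)"
    and "EMFCQ Ic Iz l u m g"
    and "\<epsilon> > 0"
    and "clarke_stationary_pen Ic Iz l u f m g \<epsilon> xbar"
    and "xbar \<in> feasF m g \<inter> intZ Iz \<inter> boxX l u"
  shows "kkt_stationary Ic Iz l u f m g xbar"
proof -
  note UI = assms(1) and DI = assms(2) and LU = assms(3) and lipf = assms(5) and lipg = assms(6)
    and eps = assms(8) and stat = assms(9) and xin = assms(10)
  have feas: "\<forall>i<m. g i xbar \<le> 0" using xin by (simp add: feasF_def)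
  have statc: "\<forall>s\<in>Dc Ic Iz l u xbar. clarke_dd Iz (Pen f m g \<epsilon>) xbar s \<ge> 0"
    using stat unfolding clarke_stationary_pen_def by blast
  have statz: "\<forall>y\<in>Bz Ic Iz l u xbar. Pen f m g \<epsilon> xbar \<le> Pen f m g \<epsilon> y"
    using stat unfolding clarke_stationary_pen_def by blast
  have pen0: "penalty m g y = 0" if "y \<in> feasF m g" for y
    using that unfolding penalty_def feasF_def by (intro sum.neutral) auto
  have disc: "\<forall>y\<in>Bz Ic Iz l u xbar \<inter> feasF m g. f xbar \<le> f y"
  proof
    fix y assume y: "y \<in> Bz Ic Iz l u xbar \<inter> feasF m g"
    hence "Pen f m g \<epsilon> xbar \<le> Pen f m g \<epsilon> y" using statz by blast
    moreover have "xbar \<in> feasF m g" using xin by blast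
    ultimately show "f xbar \<le> f y" using y pen0 unfolding Pen_def by simp
  qed
  define W where "W i = (if i < m \<and> g i xbar = 0 then
      convex hull (insert 0 ((\<lambda>v. (1/\<epsilon>) *\<^sub>R v) ` clarke_sub Iz (g i) xbar)) else {0})" for i
  define Kc where "Kc = Ksum (clarke_sub Iz f xbar) W m"
  define T where "T = dualc Ic l u xbar"
  have W0: "0 \<in> W i" for i unfolding W_def by (auto intro: hull_inc)
  have Wc: "convex (W i)" for i unfolding W_def by auto
  have Wk: "compact (W i)" for i
  proof (cases "i < m \<and> g i xbar = 0")
    case True
    hence "compact (clarke_sub Iz (g i) xbar)" using clarke_sub_props(2)[OF lipg[rule_format]] by blast
    hence "compact ((\<lambda>v. (1/\<epsilon>) *\<^sub>R v) ` clarke_sub Iz (g i) xbar)" by (rule compact_scaling)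
    hence "compact (insert 0 ((\<lambda>v. (1/\<epsilon>) *\<^sub>R v) ` clarke_sub Iz (g i) xbar))" by (rule compact_insert)
    hence "compact (convex hull (insert 0 ((\<lambda>v. (1/\<epsilon>) *\<^sub>R v) ` clarke_sub Iz (g i) xbar)))"
      by (rule compact_convex_hull)
    thus ?thesis using True unfolding W_def by simp
  next
    case False
    hence "W i = {0}" unfolding W_def by meson
    thus ?thesis by simp
  qed
  have Kcv: "convex Kc" unfolding Kc_def using clarke_sub_props(1)[OF lipf] Wc by (rule Ksum_convex)
  have Kck: "compact Kc" unfolding Kc_def using clarke_sub_props(2)[OF lipf] Wk by (rule Ksum_compact)
  have Kne: "Kc \<noteq> {}"
  proof -
    obtain a0 where "a0 \<in> clarke_sub Iz f xbar" using clarke_sub_props(3)[OF lipf] by blast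
    hence "a0 + (\<Sum>i<m. 0) \<in> Kc" unfolding Kc_def using W0 by (intro Ksum_intro)
    thus ?thesis by blast
  qed
  have ex: "\<exists>\<xi>\<in>Kc. \<xi> \<in> T"
  proof (rule ccontr)
    assume "\<not> ?thesis"
    hence dis: "Kc \<inter> T = {}" by blast
    obtain a b where sep: "\<forall>\<xi>\<in>Kc. inner a \<xi> < b" "\<forall>\<eta>\<in>T. inner a \<eta> > b"
      using separating_hyperplane_compact_closed[OF Kcv Kck Kne _ _ dis] dualc_convex dualc_closed[OF LU]
      unfolding T_def by blast
    have b0: "b < 0" using sep(2) dualc_0 unfolding T_def by fastforce
    have anon: "\<forall>\<eta>\<in>T. inner a \<eta> \<ge> 0"
    proof (rule ballI, rule ccontr)
      fix \<eta> assume e: "\<eta> \<in> T" "\<not> 0 \<le> inner a \<eta>"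
      define c where "c = b / inner a \<eta>"
      have c: "c \<ge> 0" using e(2) b0 unfolding c_def by (simp add: divide_nonpos_neg less_imp_le)
      have "c *\<^sub>R \<eta> \<in> T" using dualc_scale e(1) c unfolding T_def by blast
      hence "b < inner a (c *\<^sub>R \<eta>)" using sep(2) by blast
      also have "\<dots> = b" using e(2) unfolding c_def by simp
      finally show False by simp
    qed
    have aD: "a \<in> Dc Ic Iz l u xbar" using in_Dc[OF _ UI DI LU] anon unfolding T_def by blast
    hence az: "\<forall>i\<in>Iz. a$i = 0" unfolding Dc_def by blast
    have key: "0 \<le> cdr Iz f xbar a + (1/\<epsilon>) * (\<Sum>i<m. if g i xbar = 0 then max 0 (cdr Iz (g i) xbar a) else 0)"
      by (rule key_ineq[OF lipf lipg feas eps az statc[rule_format, OF aD]])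
    obtain a0 where a0: "a0 \<in> clarke_sub Iz f xbar" "inner a a0 = cdr Iz f xbar a"
      using sub_exists[OF lipf az] by blast
    have "\<forall>i. \<exists>v. i < m \<longrightarrow> v \<in> clarke_sub Iz (g i) xbar \<and> inner a v = cdr Iz (g i) xbar a"
      using sub_exists[OF lipg[rule_format] az] by blast
    then obtain V where V: "\<And>i. i < m \<Longrightarrow> V i \<in> clarke_sub Iz (g i) xbar \<and> inner a (V i) = cdr Iz (g i) xbar a"
      by metis
    define bb where "bb i = (if i < m \<and> g i xbar = 0 \<and> cdr Iz (g i) xbar a \<ge> 0 then (1/\<epsilon>) *\<^sub>R V i else 0)" for i
    have bbW: "bb i \<in> W i" if "i < m" for i
    proof (cases "i < m \<and> g i xbar = 0 \<and> cdr Iz (g i) xbar a \<ge> 0")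
      case True
      have "(1/\<epsilon>) *\<^sub>R V i \<in> insert 0 ((\<lambda>v. (1/\<epsilon>) *\<^sub>R v) ` clarke_sub Iz (g i) xbar)"
        using V[OF that] by blast
      thus ?thesis using True unfolding W_def bb_def by (auto intro: hull_inc)
    next
      case False
      hence "bb i = 0" unfolding bb_def by meson
      thus ?thesis using W0 by simp
    qed
    have bbi: "inner a (bb i) = (1/\<epsilon>) * (if g i xbar = 0 then max 0 (cdr Iz (g i) xbar a) else 0)" if "i < m" for i
      using V[OF that] that unfolding bb_def by (auto simp: max_def)
    have "a0 + (\<Sum>i<m. bb i) \<in> Kc" unfolding Kc_def using a0(1) bbW by (intro Ksum_intro)
    hence lt: "inner a (a0 + (\<Sum>i<m. bb i)) < b" using sep(1) by blast
    have "inner a (a0 + (\<Sum>i<m. bb i)) = cdr Iz f xbar a + (\<Sum>i<m. inner a (bb i))"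
      using a0(2) by (simp add: inner_add_right inner_sum_right)
    also have "\<dots> = cdr Iz f xbar a + (1/\<epsilon>) * (\<Sum>i<m. if g i xbar = 0 then max 0 (cdr Iz (g i) xbar a) else 0)"
      using bbi by (simp add: sum_distrib_left)
    finally show False using lt key b0 by linarith
  qed
  then obtain \<xi> where \<xi>: "\<xi> \<in> Kc" "\<xi> \<in> T" by blast
  obtain a0 bb where dec: "a0 \<in> clarke_sub Iz f xbar" "\<forall>i<m. bb i \<in> W i" "\<xi> = a0 + (\<Sum>i<m. bb i)"
    using Ksum_elim[OF \<xi>(1)[unfolded Kc_def]] by blast
  have step: "\<exists>lv. (fst lv \<ge> 0 \<and> snd lv \<in> clarke_sub Iz (g i) xbar \<and> bb i = fst lv *\<^sub>R snd lv
       \<and> (g i xbar \<noteq> 0 \<longrightarrow> fst lv = 0))" if i: "i < m" for i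
  proof -
    have ne: "clarke_sub Iz (g i) xbar \<noteq> {}" using clarke_sub_props(3)[OF lipg[rule_format, OF i]] .
    show "\<exists>lv. (fst lv \<ge> 0 \<and> snd lv \<in> clarke_sub Iz (g i) xbar \<and> bb i = fst lv *\<^sub>R snd lv
       \<and> (g i xbar \<noteq> 0 \<longrightarrow> fst lv = 0))"
    proof (cases "g i xbar = 0")
      case False
      then obtain v where v: "v \<in> clarke_sub Iz (g i) xbar" using ne by blast
      have "bb i = 0" using dec(2) i False unfolding W_def by auto
      thus ?thesis using v False by (intro exI[of _ "(0, v)"]) simp
    next
      case True
      let ?S = "(\<lambda>v. (1/\<epsilon>) *\<^sub>R v) ` clarke_sub Iz (g i) xbar"
      have cS: "convex ?S" using clarke_sub_props(1)[OF lipg[rule_format, OF i]] by (rule convex_scaling)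
      have neS: "?S \<noteq> {}" using ne by blast
      have "bb i \<in> convex hull (insert 0 ?S)" using dec(2) i True unfolding W_def by auto
      then obtain p q w where pq: "p \<ge> 0" "q \<ge> 0" "p + q = 1" "w \<in> convex hull ?S" "bb i = p *\<^sub>R 0 + q *\<^sub>R w"
        unfolding convex_hull_insert[OF neS] by blast
      have "w \<in> ?S" using pq(4) cS by (simp add: hull_same)
      then obtain v where v: "v \<in> clarke_sub Iz (g i) xbar" "w = (1/\<epsilon>) *\<^sub>R v" by blast
      have "bb i = (q / \<epsilon>) *\<^sub>R v" using pq(5) v(2) by simp
      moreover have "q / \<epsilon> \<ge> 0" using pq(2) eps by simp
      ultimately show ?thesis using v(1) True by (intro exI[of _ "(q / \<epsilon>, v)"]) simp
    qed
  qed
  hence "\<forall>i. \<exists>lv. i < m \<longrightarrow> (fst lv \<ge> 0 \<and> snd lv \<in> clarke_sub Iz (g i) xbar \<and> bb i = fst lv *\<^sub>R snd lv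
       \<and> (g i xbar \<noteq> 0 \<longrightarrow> fst lv = 0))" by blast
  then obtain LV where LV: "\<And>i. i < m \<Longrightarrow> fst (LV i) \<ge> 0 \<and> snd (LV i) \<in> clarke_sub Iz (g i) xbar
      \<and> bb i = fst (LV i) *\<^sub>R snd (LV i) \<and> (g i xbar \<noteq> 0 \<longrightarrow> fst (LV i) = 0)"
    by metis
  define lam where "lam i = fst (LV i)" for i
  have lam_nn: "\<forall>i<m. lam i \<ge> 0" using LV unfolding lam_def by blast
  have cs: "(\<Sum>i<m. lam i * g i xbar) = 0"
  proof (intro sum.neutral ballI)
    fix i assume "i \<in> {..<m}"
    hence "i < m" by simp
    thus "lam i * g i xbar = 0" using LV[of i] unfolding lam_def by (cases "g i xbar = 0") auto
  qed
  have \<xi>kkt: "\<xi> \<in> kkt_set Iz f m g lam xbar"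
    unfolding kkt_set_def
  proof (intro CollectI exI conjI)
    show "\<xi> = a0 + (\<Sum>i<m. bb i)" by (rule dec(3))
    show "a0 \<in> clarke_sub Iz f xbar" by (rule dec(1))
    show "\<forall>i<m. bb i \<in> (\<lambda>v. lam i *\<^sub>R v) ` clarke_sub Iz (g i) xbar"
      using LV unfolding lam_def by blast
  qed
  have sup: "\<forall>s\<in>Dc Ic Iz l u xbar. Sup ((\<lambda>\<xi>. ereal (\<xi> \<bullet> s)) ` kkt_set Iz f m g lam xbar) \<ge> 0"
  proof
    fix s assume s: "s \<in> Dc Ic Iz l u xbar"
    have "0 \<le> inner \<xi> s" using dualc_nonneg[OF \<xi>(2)[unfolded T_def] s UI LU] .
    hence "0 \<le> ereal (\<xi> \<bullet> s)" by simp
    thus "Sup ((\<lambda>\<xi>. ereal (\<xi> \<bullet> s)) ` kkt_set Iz f m g lam xbar) \<ge> 0"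
      using \<xi>kkt by (intro Sup_upper2[of "ereal (\<xi> \<bullet> s)"]) auto
  qed
  show ?thesis unfolding kkt_stationary_def using xin lam_nn cs sup disc by blast
qed

end
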